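(* Let $m\ge2$ and let $\mathcal W\subseteq\mathcal S_m$ be such that the graph $\mathcal G(\mathcal W)$ is a tree. Let $\mathcal B=\mathcal S_m\setminus\mathcal W$. Then from every $B\in\mathcal B$ there is a path in $\mathcal G(\mathcal B)$ from $B$ to a border quadrilateral (which lies in $\mathcal B$).
   Context: Let $Q$ be a convex quadrilateral in $\mathbb{R}^2$. Divide $Q$ into two triangles by its shorter diagonal (either diagonal if they have equal length). Label the vertices $Q_1,Q_2,Q_3,Q_4$ anticlockwise, starting at an endpoint of that diagonal, so that the diagonal is $Q_1Q_3$. For an integer $m\ge2$, define the following index sets: - $A_1=\{(k_1,k_2,k_3,0)\in\mathbb{Z}_{\ge0}^4:k_1+k_2+k_3=m-1,\ k_2\ne0\}$, - $A_2=\{(k_1,0,k_3,k_4)\in\mathbb{Z}_{\ge0}^4:k_1+k_3+k_4=m-1,\ k_4\ne0\}$, - $A_3=\{(k_1,0,k_3,0)\in\mathbb{Z}_{\ge0}^4:k_1+k_3=m-1\}$, - $A=A_1\cup A_2\cup A_3$. For $k\in A$, let $S_m(k)$ be the quadrilateral with ordered vertices $R_1R_2R_3R_4$ given below. - If $k\in A_1$: $R_1=\frac{(k_1+1)Q_1+k_2Q_2+k_3Q_3}{m}$, $R_2=\frac{k_1Q_1+(k_2+1)Q_2+k_3Q_3}{m}$, $R_3=\frac{k_1Q_1+k_2Q_2+(k_3+1)Q_3}{m}$, $R_4=\frac{(k_1+1)Q_1+(k_2-1)Q_2+(k_3+1)Q_3}{m}$. - If $k\in A_2$: $R_1=\frac{(k_1+1)Q_1+k_3Q_3+k_4Q_4}{m}$,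 $R_2=\frac{(k_1+1)Q_1+(k_3+1)Q_3+(k_4-1)Q_4}{m}$, $R_3=\frac{k_1Q_1+(k_3+1)Q_3+k_4Q_4}{m}$, $R_4=\frac{k_1Q_1+k_3Q_3+(k_4+1)Q_4}{m}$. - If $k\in A_3$: $R_1=\frac{(k_1+1)Q_1+k_3Q_3}{m}$, $R_2=\frac{k_1Q_1+Q_2+k_3Q_3}{m}$, $R_3=\frac{k_1Q_1+(k_3+1)Q_3}{m}$, $R_4=\frac{k_1Q_1+k_3Q_3+Q_4}{m}$. Let $\mathcal S_m=\{S_m(k):k\in A\}$; these quadrilaterals tile $Q$. A border quadrilateral is an element of $\mathcal S_m$ having a side contained in the boundary of $Q$. For $\mathcal W\subseteq\mathcal S_m$, the graph $\mathcal G(\mathcal W)$ has vertex set $\mathcal W$, with two elements adjacent iff they have a common side. For $\mathcal B\subseteq\mathcal S_m$, the graph $\mathcal G(\mathcal B)$ has vertex set $\mathcal B$, with two elements adjacent iff they have a common side or a common vertex. *)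

theory Defs
  imports "HOL-Analysis.Analysis"
begin

type_synonym pt = "real \<times> real"
type_synonym quad = "pt list"   (* ordered vertices R1 R2 R3 R4, length 4 *)

definition cross2 :: "pt \<Rightarrow> pt \<Rightarrow> real" where
  "cross2 u v = fst u * snd v - snd u * fst v"

definition convex_quad_ccw :: "(nat \<Rightarrow> pt) \<Rightarrow> bool" where
  "convex_quad_ccw Q \<longleftrightarrow>
     cross2 (Q 2 - Q 1) (Q 3 - Q 2) > 0 \<and> cross2 (Q 3 - Q 2) (Q 4 - Q 3) > 0 \<and>
     cross2 (Q 4 - Q 3) (Q 1 - Q 4) > 0 \<and> cross2 (Q 1 - Q 4) (Q 2 - Q 1) > 0"

definition quadA1 :: "nat \<Rightarrow> (nat \<times> nat \<times> nat \<times> nat) set" where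
  "quadA1 m = {(k1,k2,k3,k4). k4 = 0 \<and> k1 + k2 + k3 = m - 1 \<and> k2 \<noteq> 0}"
definition quadA2 :: "nat \<Rightarrow> (nat \<times> nat \<times> nat \<times> nat) set" where
  "quadA2 m = {(k1,k2,k3,k4). k2 = 0 \<and> k1 + k3 + k4 = m - 1 \<and> k4 \<noteq> 0}"
definition quadA3 :: "nat \<Rightarrow> (nat \<times> nat \<times> nat \<times> nat) set" where
  "quadA3 m = {(k1,k2,k3,k4). k2 = 0 \<and> k4 = 0 \<and> k1 + k3 = m - 1}"
definition quadA :: "nat \<Rightarrow> (nat \<times> nat \<times> nat \<times> nat) set" where
  "quadA m = quadA1 m \<union> quadA2 m \<union> quadA3 m"

definition bpt :: "nat \<Rightarrow> (nat \<Rightarrow> pt) \<Rightarrow> nat \<Rightarrow> nat \<Rightarrow> nat \<Rightarrow> nat \<Rightarrow> pt" where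
  "bpt m Q a b c d = (1 / real m) *\<^sub>R
     (real a *\<^sub>R Q 1 + real b *\<^sub>R Q 2 + real c *\<^sub>R Q 3 + real d *\<^sub>R Q 4)"

text \<open>S_m(k); the three cases A1 (k2 \<noteq> 0), A2 (k4 \<noteq> 0), A3 (k2 = k4 = 0) are disjoint on A.\<close>
definition Squad :: "nat \<Rightarrow> (nat \<Rightarrow> pt) \<Rightarrow> nat \<times> nat \<times> nat \<times> nat \<Rightarrow> quad" where
  "Squad m Q k = (case k of (k1,k2,k3,k4) \<Rightarrow>
     if k \<in> quadA1 m then
       [bpt m Q (k1+1) k2 k3 0, bpt m Q k1 (k2+1) k3 0, bpt m Q k1 k2 (k3+1) 0,
        bpt m Q (k1+1) (k2-1) (k3+1) 0]
     else if k \<in> quadA2 m then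
       [bpt m Q (k1+1) 0 k3 k4, bpt m Q (k1+1) 0 (k3+1) (k4-1), bpt m Q k1 0 (k3+1) k4,
        bpt m Q k1 0 k3 (k4+1)]
     else
       [bpt m Q (k1+1) 0 k3 0, bpt m Q k1 1 k3 0, bpt m Q k1 0 (k3+1) 0, bpt m Q k1 0 k3 1])"

definition Sset :: "nat \<Rightarrow> (nat \<Rightarrow> pt) \<Rightarrow> quad set" where
  "Sset m Q = Squad m Q ` quadA m"

definition side :: "quad \<Rightarrow> nat \<Rightarrow> pt set" where
  "side q i = closed_segment (q ! i) (q ! (Suc i mod 4))"

definition common_side :: "quad \<Rightarrow> quad \<Rightarrow> bool" where
  "common_side q r \<longleftrightarrow> (\<exists>i<4. \<exists>j<4. side q i = side r j)"

definition common_vertex :: "quad \<Rightarrow> quad \<Rightarrow> bool" where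
  "common_vertex q r \<longleftrightarrow> (\<exists>i<4. \<exists>j<4. q ! i = r ! j)"

definition border_quad :: "nat \<Rightarrow> (nat \<Rightarrow> pt) \<Rightarrow> quad \<Rightarrow> bool" where
  "border_quad m Q q \<longleftrightarrow> q \<in> Sset m Q \<and>
     (\<exists>i<4. side q i \<subseteq> frontier (convex hull {Q 1, Q 2, Q 3, Q 4}))"

definition adjW :: "quad \<Rightarrow> quad \<Rightarrow> bool" where
  "adjW q r \<longleftrightarrow> q \<noteq> r \<and> common_side q r"
definition adjB :: "quad \<Rightarrow> quad \<Rightarrow> bool" where
  "adjB q r \<longleftrightarrow> q \<noteq> r \<and> (common_side q r \<or> common_vertex q r)"

definition is_gpath :: "'a set \<Rightarrow> ('a \<Rightarrow> 'a \<Rightarrow> bool) \<Rightarrow> 'a list \<Rightarrow> bool" where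
  "is_gpath V E ps \<longleftrightarrow> ps \<noteq> [] \<and> set ps \<subseteq> V \<and> distinct ps \<and>
     (\<forall>i. Suc i < length ps \<longrightarrow> E (ps ! i) (ps ! Suc i))"

definition graph_connected :: "'a set \<Rightarrow> ('a \<Rightarrow> 'a \<Rightarrow> bool) \<Rightarrow> bool" where
  "graph_connected V E \<longleftrightarrow>
     (\<forall>u\<in>V. \<forall>v\<in>V. \<exists>ps. is_gpath V E ps \<and> hd ps = u \<and> last ps = v)"

definition has_cycle :: "'a set \<Rightarrow> ('a \<Rightarrow> 'a \<Rightarrow> bool) \<Rightarrow> bool" where
  "has_cycle V E \<longleftrightarrow> (\<exists>cs. 3 \<le> length cs \<and> is_gpath V E cs \<and> E (last cs) (hd cs))"

definition is_tree :: "'a set \<Rightarrow> ('a \<Rightarrow> 'a \<Rightarrow> bool) \<Rightarrow> bool" where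
  "is_tree V E \<longleftrightarrow> V \<noteq> {} \<and> graph_connected V E \<and> \<not> has_cycle V E"

end

theory Submission
  imports Defs
begin


lemma gpath_mono: "is_gpath V E ps \<Longrightarrow> V \<subseteq> V' \<Longrightarrow> is_gpath V' E ps"
  unfolding is_gpath_def by auto

lemma has_cycle_mono: "has_cycle V E \<Longrightarrow> V \<subseteq> V' \<Longrightarrow> has_cycle V' E"
  unfolding has_cycle_def using gpath_mono by blast

lemma gpath_len: "finite V \<Longrightarrow> is_gpath V E ps \<Longrightarrow> length ps < Suc (card V)"
  unfolding is_gpath_def
  by (metis card_mono distinct_card le_imp_less_Suc)

lemma leaf_exists:
  assumes fin: "finite V" and ne: "V \<noteq> {}" and irr: "\<And>x. \<not> E x x"
    and nc: "\<not> has_cycle V E"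
  shows "\<exists>w\<in>V. \<forall>u v. u \<in> V \<longrightarrow> v \<in> V \<longrightarrow> E w u \<longrightarrow> E w v \<longrightarrow> u = v"
proof -
  obtain x where x: "x \<in> V" using ne by blast
  have "is_gpath V E [x]" using x by (simp add: is_gpath_def)
  then obtain ps where ps: "is_gpath V E ps" and mx: "\<And>qs. is_gpath V E qs \<Longrightarrow> length qs \<le> length ps"
    using ex_has_greatest_nat[of "is_gpath V E" "[x]" length "Suc (card V)"] gpath_len[OF fin]
    by blast
  have psne: "ps \<noteq> []" and psV: "set ps \<subseteq> V" and dps: "distinct ps"
    and ch: "\<And>i. Suc i < length ps \<Longrightarrow> E (ps ! i) (ps ! Suc i)"
    using ps by (auto simp: is_gpath_def)
  define w where "w = last ps"
  have wV: "w \<in> V" using psne psV w_def by auto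
  have inps: "u \<in> set ps" if "u \<in> V" "E w u" for u
  proof (rule ccontr)
    assume nu: "u \<notin> set ps"
    have "is_gpath V E (ps @ [u])"
      unfolding is_gpath_def
    proof (intro conjI allI impI)
      fix i assume i: "Suc i < length (ps @ [u])"
      show "E ((ps @ [u]) ! i) ((ps @ [u]) ! Suc i)"
      proof (cases "Suc i < length ps")
        case True then show ?thesis using ch[OF True] by (simp add: nth_append)
      next
        case False
        then have "i = length ps - 1" using i by simp
        then show ?thesis using \<open>E w u\<close> psne False
          by (simp add: nth_append w_def last_conv_nth)
      qed
    qed (use psV dps nu that in auto)
    then show False using mx[of "ps @ [u]"] by simp
  qed
  have cyc: False if "u \<in> V" "E w u" "u = ps ! k" "k + 2 < length ps" for u k
  proof -
    define cs where "cs = drop k ps"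
    have "is_gpath V E cs"
      unfolding is_gpath_def cs_def
    proof (intro conjI allI impI)
      fix i assume "Suc i < length (drop k ps)"
      then show "E (drop k ps ! i) (drop k ps ! Suc i)" using ch[of "k+i"] by simp
    qed (use that psV dps in \<open>auto dest: in_set_dropD\<close>)
    moreover have "3 \<le> length cs" using that by (simp add: cs_def)
    moreover have "hd cs = u" using that by (simp add: cs_def hd_drop_conv_nth)
    moreover have "last cs = w" using that by (simp add: cs_def w_def)
    ultimately show False using nc \<open>E w u\<close> unfolding has_cycle_def by blast
  qed
  have "\<forall>u v. u \<in> V \<longrightarrow> v \<in> V \<longrightarrow> E w u \<longrightarrow> E w v \<longrightarrow> u = v"
  proof (intro allI impI)
    fix u v assume uv: "u \<in> V" "v \<in> V" "E w u" "E w v"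
    obtain i where i: "i < length ps" "u = ps ! i" using inps uv by (metis in_set_conv_nth)
    obtain j where j: "j < length ps" "v = ps ! j" using inps uv by (metis in_set_conv_nth)
    have "i \<noteq> length ps - 1" using i irr uv psne by (metis last_conv_nth w_def)
    moreover have "j \<noteq> length ps - 1" using j irr uv psne by (metis last_conv_nth w_def)
    moreover have "\<not> i + 2 < length ps" using cyc uv i by blast
    moreover have "\<not> j + 2 < length ps" using cyc uv j by blast
    ultimately have "i = j" using i j by linarith
    then show "u = v" using i j by simp
  qed
  then show ?thesis using wV by blast
qed

lemma rtranclp_distinct_path:
  assumes "R\<^sup>*\<^sup>* x y" "P x" "\<And>a b. R a b \<Longrightarrow> P b"
  shows "\<exists>ps. ps \<noteq> [] \<and> hd ps = x \<and> last ps = y \<and> distinct ps \<and> set ps \<subseteq> {z. P z} \<and>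
    (\<forall>i. Suc i < length ps \<longrightarrow> R (ps ! i) (ps ! Suc i))"
  using assms(1,2)
proof (induction rule: converse_rtranclp_induct)
  case base
  then show ?case by (intro exI[of _ "[y]"]) auto
next
  case (step x x')
  then obtain ps where ps: "ps \<noteq> []" "hd ps = x'" "last ps = y" "distinct ps" "set ps \<subseteq> {z. P z}"
    "\<forall>i. Suc i < length ps \<longrightarrow> R (ps ! i) (ps ! Suc i)" using assms(3) by blast
  show ?case
  proof (cases "x \<in> set ps")
    case True
    then obtain k where k: "k < length ps" "ps ! k = x" by (metis in_set_conv_nth)
    show ?thesis
      apply (intro exI[of _ "drop k ps"])
      using ps k by (auto simp: hd_drop_conv_nth dest: in_set_dropD)
  next
    case False
    show ?thesis
      apply (intro exI[of _ "x # ps"])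
      using ps False step by (auto simp: nth_Cons split: nat.splits simp: hd_conv_nth)
  qed
qed



type_synonym cell = "int \<times> int"

definition inG :: "nat \<Rightarrow> cell \<Rightarrow> bool" where
  "inG m c \<longleftrightarrow> 0 \<le> fst c \<and> fst c < int m \<and> 0 \<le> snd c \<and> snd c < int m"
definition inG' :: "nat \<Rightarrow> cell \<Rightarrow> bool" where
  "inG' m c \<longleftrightarrow> -1 \<le> fst c \<and> fst c \<le> int m \<and> -1 \<le> snd c \<and> snd c \<le> int m"
definition adj8 :: "cell \<Rightarrow> cell \<Rightarrow> bool" where
  "adj8 c d \<longleftrightarrow> c \<noteq> d \<and> \<bar>fst c - fst d\<bar> \<le> 1 \<and> \<bar>snd c - snd d\<bar> \<le> 1"
definition adj4 :: "cell \<Rightarrow> cell \<Rightarrow> bool" where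
  "adj4 c d \<longleftrightarrow> \<bar>fst c - fst d\<bar> + \<bar>snd c - snd d\<bar> = 1"
definition RW :: "nat \<Rightarrow> cell set \<Rightarrow> cell \<Rightarrow> cell \<Rightarrow> bool" where
  "RW m W c d \<longleftrightarrow> inG' m c \<and> inG' m d \<and> c \<notin> W \<and> d \<notin> W \<and> adj8 c d"
definition good :: "nat \<Rightarrow> cell set \<Rightarrow> cell \<Rightarrow> bool" where
  "good m W x \<longleftrightarrow> (\<exists>f. \<not> inG m f \<and> (RW m W)\<^sup>*\<^sup>* x f)"

lemma RW_sym: "RW m W c d \<Longrightarrow> RW m W d c"
  unfolding RW_def adj8_def by (auto simp: abs_minus_commute)

lemma RW_rtr_sym: assumes "(RW m W)\<^sup>*\<^sup>* c d" shows "(RW m W)\<^sup>*\<^sup>* d c"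
proof -
  have "symp (RW m W)" by (rule sympI) (rule RW_sym)
  then show ?thesis using symp_rtranclp sympD assms by metis
qed

lemma base_walk:
  "\<forall>i j. i = int n - 1 \<longrightarrow> i \<le> int m \<longrightarrow> -1 \<le> j \<longrightarrow> j \<le> int m \<longrightarrow> (RW m {})\<^sup>*\<^sup>* (i,j) (-1,j)"
proof (induction n)
  case 0
  then show ?case by simp
next
  case (Suc n)
  show ?case
  proof (intro allI impI)
    fix i j assume h: "i = int (Suc n) - 1" "i \<le> int m" "-1 \<le> j" "j \<le> int m"
    have "RW m {} (i,j) (i-1,j)" using h by (auto simp: RW_def inG'_def adj8_def)
    moreover have "(RW m {})\<^sup>*\<^sup>* (i-1,j) (-1,j)" using Suc h by auto
    ultimately show "(RW m {})\<^sup>*\<^sup>* (i,j) (-1,j)" by (rule converse_rtranclp_into_rtranclp)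
  qed
qed

lemma good_empty: "inG' m b \<Longrightarrow> good m {} b"
proof -
  assume b: "inG' m b"
  obtain i j where ij: "b = (i,j)" by (cases b)
  have "(RW m {})\<^sup>*\<^sup>* (i,j) (-1,j)"
    using base_walk[of "nat (i+1)" m] b ij by (auto simp: inG'_def)
  then show ?thesis unfolding good_def ij by (intro exI[of _ "(-1,j)"]) (auto simp: inG_def)
qed

definition leaf :: "cell set \<Rightarrow> cell \<Rightarrow> bool" where
  "leaf W w \<longleftrightarrow> (\<forall>u v. u \<in> W \<longrightarrow> v \<in> W \<longrightarrow> adj4 w u \<longrightarrow> adj4 w v \<longrightarrow> u = v)"

lemma ring:
  assumes w: "inG m w" and lf: "leaf W w"
    and n1: "adj8 w n1" "n1 \<notin> W" and n2: "adj8 w n2" "n2 \<notin> W"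
  shows "(RW m W)\<^sup>*\<^sup>* n1 n2"
proof -
  obtain a b where ab: "w = (a,b)" by (cases w)
  have st: "RW m W x y" if "adj8 x y" "adj8 w x" "adj8 w y" "x \<notin> W" "y \<notin> W" for x y
    using that w ab unfolding RW_def inG'_def inG_def adj8_def by auto
  have st2: "(RW m W)\<^sup>*\<^sup>* x y" if "adj8 x y" "adj8 w x" "adj8 w y" "x \<notin> W" "y \<notin> W" for x y
    using st[OF that] by blast
  have lf2: "\<not> (u \<in> W \<and> v \<in> W)" if "adj4 w u" "adj4 w v" "u \<noteq> v" for u v
    using lf that unfolding leaf_def by blast
  define N where "N = (a-1,b)"
  define E where "E = (a,b+1)"
  define S where "S = (a+1,b)"
  define Wc where "Wc = (a,b-1)"
  have e4: "adj4 w N" "adj4 w E" "adj4 w S" "adj4 w Wc"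
    by (auto simp: adj4_def ab N_def E_def S_def Wc_def)
  have e8: "adj8 w N" "adj8 w E" "adj8 w S" "adj8 w Wc"
    by (auto simp: adj8_def ab N_def E_def S_def Wc_def)
  have cyc: "adj8 N E" "adj8 E S" "adj8 S Wc" "adj8 Wc N"
    by (auto simp: adj8_def N_def E_def S_def Wc_def)
  have dist: "N \<noteq> E" "N \<noteq> S" "N \<noteq> Wc" "E \<noteq> S" "E \<noteq> Wc" "S \<noteq> Wc"
    by (auto simp: N_def E_def S_def Wc_def)
  have one: "\<not> (N \<in> W \<and> E \<in> W)" "\<not> (N \<in> W \<and> S \<in> W)" "\<not> (N \<in> W \<and> Wc \<in> W)"
     "\<not> (E \<in> W \<and> S \<in> W)" "\<not> (E \<in> W \<and> Wc \<in> W)" "\<not> (S \<in> W \<and> Wc \<in> W)"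
    using lf2 e4 dist by blast+
  have symm: "\<And>x y. (RW m W)\<^sup>*\<^sup>* x y \<Longrightarrow> (RW m W)\<^sup>*\<^sup>* y x" by (rule RW_rtr_sym)
  have edges: "(RW m W)\<^sup>*\<^sup>* x y" if "x \<in> {N,E,S,Wc}" "y \<in> {N,E,S,Wc}" "x \<notin> W" "y \<notin> W" for x y
  proof -
    have NE: "N \<notin> W \<Longrightarrow> E \<notin> W \<Longrightarrow> (RW m W)\<^sup>*\<^sup>* N E" using st2 cyc e8 by blast
    have ES: "E \<notin> W \<Longrightarrow> S \<notin> W \<Longrightarrow> (RW m W)\<^sup>*\<^sup>* E S" using st2 cyc e8 by blast
    have SW: "S \<notin> W \<Longrightarrow> Wc \<notin> W \<Longrightarrow> (RW m W)\<^sup>*\<^sup>* S Wc" using st2 cyc e8 by blast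
    have WN: "Wc \<notin> W \<Longrightarrow> N \<notin> W \<Longrightarrow> (RW m W)\<^sup>*\<^sup>* Wc N" using st2 cyc e8 by blast
    have NS: "N \<notin> W \<Longrightarrow> S \<notin> W \<Longrightarrow> (RW m W)\<^sup>*\<^sup>* N S"
      using NE ES SW WN one symm by (meson rtranclp_trans)
    have EW: "E \<notin> W \<Longrightarrow> Wc \<notin> W \<Longrightarrow> (RW m W)\<^sup>*\<^sup>* E Wc"
      using NE ES SW WN one symm by (meson rtranclp_trans)
    show ?thesis using that NE ES SW WN NS EW symm by blast
  qed
  have toedge: "\<exists>e\<in>{N,E,S,Wc}. e \<notin> W \<and> (RW m W)\<^sup>*\<^sup>* n e" if nw: "adj8 w n" "n \<notin> W" for n
  proof -
    obtain x y where xy: "n = (x,y)" by (cases n)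
    have "x \<in> {a-1,a,a+1}" "y \<in> {b-1,b,b+1}" using that xy ab by (auto simp: adj8_def)
    then consider "n \<in> {N,E,S,Wc}" | "n = (a-1,b-1)" | "n = (a-1,b+1)" | "n = (a+1,b-1)" | "n = (a+1,b+1)"
      using nw xy ab by (auto simp: N_def E_def S_def Wc_def adj8_def)
    then show ?thesis
    proof cases
      case 1 then show ?thesis using that by blast
    next
      case 2
      have "adj8 n N" "adj8 n Wc" using 2 by (auto simp: adj8_def N_def Wc_def)
      then show ?thesis using st2 nw e8 one by blast
    next
      case 3
      have "adj8 n N" "adj8 n E" using 3 by (auto simp: adj8_def N_def E_def)
      then show ?thesis using st2 nw e8 one by blast
    next
      case 4
      have "adj8 n S" "adj8 n Wc" using 4 by (auto simp: adj8_def S_def Wc_def)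
      then show ?thesis using st2 nw e8 one by blast
    next
      case 5
      have "adj8 n S" "adj8 n E" using 5 by (auto simp: adj8_def S_def E_def)
      then show ?thesis using st2 nw e8 one by blast
    qed
  qed
  obtain e1 where e1: "e1 \<in> {N,E,S,Wc}" "e1 \<notin> W" "(RW m W)\<^sup>*\<^sup>* n1 e1" using toedge n1 by blast
  obtain e2 where e2: "e2 \<in> {N,E,S,Wc}" "e2 \<notin> W" "(RW m W)\<^sup>*\<^sup>* n2 e2" using toedge n2 by blast
  have "(RW m W)\<^sup>*\<^sup>* e1 e2" using edges e1 e2 by blast
  then show ?thesis using e1 e2 symm by (meson rtranclp_trans)
qed



lemma convert:
  assumes wW: "w \<in> W" and wG: "inG m w" and lf: "leaf W w" and WG: "W \<subseteq> {c. inG m c}"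
    and p: "(RW m (W - {w}))\<^sup>*\<^sup>* x f" and f: "\<not> inG m f"
  shows "(x \<notin> W \<longrightarrow> good m W x) \<and> (x = w \<longrightarrow> (\<forall>n. adj8 w n \<longrightarrow> n \<notin> W \<longrightarrow> good m W n))"
  using p
proof (induction rule: converse_rtranclp_induct)
  case base
  have "f \<noteq> w" using f wG by auto
  then show ?case using f unfolding good_def by blast
next
  case (step x x')
  have xx: "RW m (W - {w}) x x'" by fact
  have IH1: "x' \<notin> W \<Longrightarrow> good m W x'" and IH2: "x' = w \<Longrightarrow> adj8 w n \<Longrightarrow> n \<notin> W \<Longrightarrow> good m W n" for n
    using step.IH by blast+
  have a8: "adj8 x x'" and ins: "inG' m x" "inG' m x'" and nW: "x \<notin> W - {w}" "x' \<notin> W - {w}"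
    using xx by (auto simp: RW_def)
  have xnx: "x \<noteq> x'" using a8 by (simp add: adj8_def)
  show ?case
  proof (intro conjI impI allI)
    assume xW: "x \<notin> W"
    show "good m W x"
    proof (cases "x' \<in> W")
      case True
      then have "x' = w" using nW by auto
      moreover have "adj8 w x" using a8 \<open>x' = w\<close> by (auto simp: adj8_def abs_minus_commute)
      ultimately show ?thesis using IH2 xW by blast
    next
      case False
      then have "RW m W x x'" using a8 ins xW by (simp add: RW_def)
      moreover obtain g where "\<not> inG m g" "(RW m W)\<^sup>*\<^sup>* x' g" using IH1[OF False] good_def by blast
      ultimately show ?thesis unfolding good_def by (meson converse_rtranclp_into_rtranclp)
    qed
  next
    fix n assume xw: "x = w" and n: "adj8 w n" "n \<notin> W"
    have x'W: "x' \<notin> W" using nW xw xnx by auto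
    have "adj8 w x'" using a8 xw by simp
    then have "(RW m W)\<^sup>*\<^sup>* n x'" using ring[OF wG lf n] x'W by blast
    moreover obtain g where "\<not> inG m g" "(RW m W)\<^sup>*\<^sup>* x' g" using IH1[OF x'W] good_def by blast
    ultimately show "good m W n" unfolding good_def by (meson rtranclp_trans)
  qed
qed

lemma grid_main:
  "finite W \<Longrightarrow> W \<subseteq> {c. inG m c} \<Longrightarrow> \<not> has_cycle W adj4 \<Longrightarrow> inG' m b \<Longrightarrow> b \<notin> W \<Longrightarrow> good m W b"
proof (induction "card W" arbitrary: W b rule: less_induct)
  case less
  show ?case
  proof (cases "W = {}")
    case True
    then show ?thesis using good_empty less by simp
  next
    case False
    have irr: "\<And>x. \<not> adj4 x x" by (simp add: adj4_def)
    obtain w where w: "w \<in> W" and lf0: "\<forall>u v. u \<in> W \<longrightarrow> v \<in> W \<longrightarrow> adj4 w u \<longrightarrow> adj4 w v \<longrightarrow> u = v"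
      using leaf_exists[OF less.prems(1) False irr less.prems(3)] by blast
    have lf: "leaf W w" using lf0 by (simp add: leaf_def)
    have wG: "inG m w" using w less.prems(2) by auto
    define W' where "W' = W - {w}"
    have c: "card W' < card W" using w less.prems(1) by (metis W'_def card_Diff1_less)
    have "\<not> has_cycle W' adj4" using less.prems(3) has_cycle_mono[of W' adj4 W] by (auto simp: W'_def)
    then have "good m W' b" using less.hyps[OF c, of b] less.prems by (auto simp: W'_def)
    then obtain f where f: "\<not> inG m f" "(RW m W')\<^sup>*\<^sup>* b f" by (auto simp: good_def)
    then show ?thesis using convert[OF w wG lf less.prems(2), of b f] less.prems(5) by (simp add: W'_def)
  qed
qed

definition RG :: "nat \<Rightarrow> cell set \<Rightarrow> cell \<Rightarrow> cell \<Rightarrow> bool" where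
  "RG m W c d \<longleftrightarrow> inG m c \<and> inG m d \<and> c \<notin> W \<and> d \<notin> W \<and> adj8 c d"
definition bord :: "nat \<Rightarrow> cell \<Rightarrow> bool" where
  "bord m c \<longleftrightarrow> fst c = 0 \<or> snd c = 0 \<or> fst c = int m - 1 \<or> snd c = int m - 1"

lemma exit_frame:
  assumes "(RW m W)\<^sup>*\<^sup>* x f" "\<not> inG m f"
  shows "inG m x \<longrightarrow> (\<exists>y. inG m y \<and> bord m y \<and> y \<notin> W \<and> (RG m W)\<^sup>*\<^sup>* x y)"
  using assms(1)
proof (induction rule: converse_rtranclp_induct)
  case base
  then show ?case using assms(2) by simp
next
  case (step x x')
  show ?case
  proof
    assume xG: "inG m x"
    have r: "RW m W x x'" by fact
    show "\<exists>y. inG m y \<and> bord m y \<and> y \<notin> W \<and> (RG m W)\<^sup>*\<^sup>* x y"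
    proof (cases "inG m x'")
      case True
      then obtain y where y: "inG m y" "bord m y" "y \<notin> W" "(RG m W)\<^sup>*\<^sup>* x' y" using step.IH by blast
      have "RG m W x x'" using r xG True by (simp add: RW_def RG_def)
      then show ?thesis using y by (meson converse_rtranclp_into_rtranclp)
    next
      case False
      have "bord m x" using False xG r unfolding inG_def bord_def RW_def adj8_def inG'_def by auto
      then show ?thesis using xG r unfolding RW_def by blast
    qed
  qed
qed



definition Vp :: "nat \<Rightarrow> (nat \<Rightarrow> pt) \<Rightarrow> int \<Rightarrow> int \<Rightarrow> pt" where
  "Vp m Q p q = (if p \<le> q then bpt m Q (nat (int m - q)) (nat (q - p)) (nat p) 0
                 else bpt m Q (nat (int m - p)) 0 (nat q) (nat (p - q)))"

definition gq :: "nat \<Rightarrow> (nat \<Rightarrow> pt) \<Rightarrow> cell \<Rightarrow> quad" where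
  "gq m Q c = (case c of (i,j) \<Rightarrow> [Vp m Q i j, Vp m Q i (j+1), Vp m Q (i+1) (j+1), Vp m Q (i+1) j])"

definition cellk :: "nat \<Rightarrow> cell \<Rightarrow> nat \<times> nat \<times> nat \<times> nat" where
  "cellk m c = (case c of (i,j) \<Rightarrow>
     if i < j then (nat (int m - 1 - j), nat (j - i), nat i, 0)
     else if j < i then (nat (int m - 1 - i), 0, nat j, nat (i - j))
     else (nat (int m - 1 - i), 0, nat i, 0))"

lemma cellk_A: "inG m c \<Longrightarrow> cellk m c \<in> quadA m"
  by (cases c) (auto simp: cellk_def inG_def quadA_def quadA1_def quadA2_def quadA3_def)

lemma cellk_surj: "m \<ge> 1 \<Longrightarrow> k \<in> quadA m \<Longrightarrow> \<exists>c. inG m c \<and> cellk m c = k"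
proof -
  assume m: "m \<ge> 1" and k: "k \<in> quadA m"
  obtain k1 k2 k3 k4 where kk: "k = (k1,k2,k3,k4)" by (cases k) auto
  consider "k4 = 0" "k1 + k2 + k3 = m - 1" "k2 \<noteq> 0" | "k2 = 0" "k1 + k3 + k4 = m - 1" "k4 \<noteq> 0"
    | "k2 = 0" "k4 = 0" "k1 + k3 = m - 1"
    using k kk by (auto simp: quadA_def quadA1_def quadA2_def quadA3_def)
  then show ?thesis
  proof cases
    case 1
    then show ?thesis using kk
      by (intro exI[of _ "(int k3, int k3 + int k2)"]) (auto simp: cellk_def inG_def)
  next
    case 2
    then show ?thesis using kk
      by (intro exI[of _ "(int k3 + int k4, int k3)"]) (auto simp: cellk_def inG_def)
  next
    case 3
    then show ?thesis using kk m
      by (intro exI[of _ "(int k3, int k3)"]) (auto simp: cellk_def inG_def)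
  qed
qed

lemma bpt_eqI: "a = a' \<Longrightarrow> b = b' \<Longrightarrow> c = c' \<Longrightarrow> d = d' \<Longrightarrow> bpt m Q a b c d = bpt m Q a' b' c' d'"
  by simp

lemma Squad_cellk: "inG m c \<Longrightarrow> Squad m Q (cellk m c) = gq m Q c"
proof -
  assume c: "inG m c"
  obtain i j where ij: "c = (i,j)" by (cases c)
  have r: "0 \<le> i" "i < int m" "0 \<le> j" "j < int m" using c ij by (auto simp: inG_def)
  consider "i < j" | "j < i" | "i = j" by linarith
  then show ?thesis
  proof cases
    case 1
    have A: "cellk m c \<in> quadA1 m" using 1 r ij by (auto simp: cellk_def quadA1_def)
    have e1: "Suc (nat (int m - (j + 1))) = nat (int m - j)" "Suc (nat (j - i)) = nat (j + 1 - i)"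
      "Suc (nat i) = nat (i+1)" "nat (j - i) - Suc 0 = nat (j - (i+1))" "nat (int m - 1 - j) = nat (int m - (j+1))"
      using 1 r by auto
    show ?thesis using 1 A ij r unfolding Squad_def gq_def Vp_def
      by (simp add: cellk_def e1)
  next
    case 2
    have A: "cellk m c \<notin> quadA1 m" "cellk m c \<in> quadA2 m" using 2 r ij by (auto simp: cellk_def quadA1_def quadA2_def)
    have e1: "Suc (nat (int m - (i + 1))) = nat (int m - i)" "Suc (nat (i - j)) = nat (i + 1 - j)"
      "Suc (nat j) = nat (j+1)" "nat (i - j) - Suc 0 = nat (i - (j+1))" "nat (int m - 1 - i) = nat (int m - (i+1))"
      using 2 r by auto
    show ?thesis using 2 A ij r unfolding Squad_def gq_def Vp_def
      by (cases "i = j + 1") (auto simp: cellk_def e1 intro!: bpt_eqI)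
  next
    case 3
    have A: "cellk m c \<notin> quadA1 m" "cellk m c \<notin> quadA2 m" using 3 r ij by (auto simp: cellk_def quadA1_def quadA2_def)
    have e1: "Suc (nat (int m - (i + 1))) = nat (int m - i)"
      "Suc (nat i) = nat (i+1)" "nat (int m - 1 - i) = nat (int m - (i+1))"
      using 3 r by auto
    show ?thesis using 3 A ij r unfolding Squad_def gq_def Vp_def
      by (auto simp: cellk_def e1 intro!: bpt_eqI)
  qed
qed

lemma Sset_eq: "m \<ge> 1 \<Longrightarrow> Sset m Q = gq m Q ` {c. inG m c}"
proof (intro equalityI)
  assume "m \<ge> 1"
  then show "Sset m Q \<subseteq> gq m Q ` {c. inG m c}"
    unfolding Sset_def using cellk_surj Squad_cellk by (smt (verit) image_iff mem_Collect_eq subsetI)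
  show "gq m Q ` {c. inG m c} \<subseteq> Sset m Q"
    unfolding Sset_def using cellk_A Squad_cellk by (metis (mono_tags, lifting) image_eqI image_subsetI mem_Collect_eq)
qed



lemma cross2_add: "cross2 e (x + y) = cross2 e x + cross2 e y"
  by (simp add: cross2_def algebra_simps)
lemma cross2_scale: "cross2 e (r *\<^sub>R x) = r * cross2 e x"
  by (simp add: cross2_def algebra_simps)
lemma cross2_self: "cross2 e e = 0"
  by (simp add: cross2_def algebra_simps)
lemma cross2_anti: "cross2 e x = - cross2 x e"
  by (simp add: cross2_def algebra_simps)

lemma bpt_rel:
  assumes "a + b + c + d = m" "m > 0"
  shows "bpt m Q a b c d - Q 1 = (1 / real m) *\<^sub>R (real b *\<^sub>R (Q 2 - Q 1) + real c *\<^sub>R (Q 3 - Q 1) + real d *\<^sub>R (Q 4 - Q 1))"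
proof -
  have ra: "real a = real m - real b - real c - real d" using assms(1) by linarith
  have m0: "real m \<noteq> 0" using assms(2) by simp
  show ?thesis unfolding bpt_def ra using m0
    by (simp add: prod_eq_iff field_simps)
qed

lemma Vp_rel:
  assumes "m > 0" "0 \<le> p" "p \<le> int m" "0 \<le> q" "q \<le> int m"
  shows "Vp m Q p q - Q 1 = (1 / real m) *\<^sub>R (if p \<le> q then real_of_int (q - p) *\<^sub>R (Q 2 - Q 1) + real_of_int p *\<^sub>R (Q 3 - Q 1)
            else real_of_int q *\<^sub>R (Q 3 - Q 1) + real_of_int (p - q) *\<^sub>R (Q 4 - Q 1))"
proof (cases "p \<le> q")
  case True
  have "nat (int m - q) + nat (q - p) + nat p + 0 = m" using True assms by linarith
  from bpt_rel[OF this assms(1), of Q] show ?thesis using True assms by (simp add: Vp_def)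
next
  case False
  have "nat (int m - p) + 0 + nat q + nat (p - q) = m" using False assms by linarith
  from bpt_rel[OF this assms(1), of Q] show ?thesis using False assms by (simp add: Vp_def)
qed

lemma Vp_inj:
  assumes cv: "convex_quad_ccw Q" and m: "m > 0"
    and r: "0 \<le> p" "p \<le> int m" "0 \<le> q" "q \<le> int m" "0 \<le> p'" "p' \<le> int m" "0 \<le> q'" "q' \<le> int m"
    and eq: "Vp m Q p q = Vp m Q p' q'"
  shows "p = p' \<and> q = q'"
proof -
  define u where "u = Q 2 - Q 1"
  define v where "v = Q 3 - Q 1"
  define w where "w = Q 4 - Q 1"
  have X: "cross2 u v > 0" using cv unfolding convex_quad_ccw_def u_def v_def
    by (simp add: cross2_def algebra_simps)
  have Y: "cross2 v w > 0" using cv unfolding convex_quad_ccw_def w_def v_def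
    by (simp add: cross2_def algebra_simps)
  have mr: "real m > 0" using m by simp
  define F where "F e P = real m * cross2 e (P - Q 1)" for e P
  have FV: "F e (Vp m Q a b) = (if a \<le> b then real_of_int (b - a) * cross2 e u + real_of_int a * cross2 e v
            else real_of_int b * cross2 e v + real_of_int (a - b) * cross2 e w)"
    if "0 \<le> a" "a \<le> int m" "0 \<le> b" "b \<le> int m" for e a b
    unfolding F_def Vp_rel[OF m that] u_def[symmetric] v_def[symmetric] w_def[symmetric]
    using mr by (simp add: cross2_add cross2_scale)
  have F1: "F v (Vp m Q a b) = (if a \<le> b then - real_of_int (b - a) * cross2 u v else real_of_int (a - b) * cross2 v w)"
    if "0 \<le> a" "a \<le> int m" "0 \<le> b" "b \<le> int m" for a b
    using FV[OF that, of v] by (simp add: cross2_self cross2_anti[of v u] algebra_simps)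
  have F2: "a \<le> b \<Longrightarrow> F u (Vp m Q a b) = real_of_int a * cross2 u v"
    if "0 \<le> a" "a \<le> int m" "0 \<le> b" "b \<le> int m" for a b
    using FV[OF that, of u] by (simp add: cross2_self)
  have F3: "\<not> a \<le> b \<Longrightarrow> F w (Vp m Q a b) = - real_of_int b * cross2 v w"
    if "0 \<le> a" "a \<le> int m" "0 \<le> b" "b \<le> int m" for a b
    using FV[OF that, of w] by (simp add: cross2_self cross2_anti[of w v])
  have e1: "F v (Vp m Q p q) = F v (Vp m Q p' q')" using eq by simp
  have e2: "F u (Vp m Q p q) = F u (Vp m Q p' q')" using eq by simp
  have e3: "F w (Vp m Q p q) = F w (Vp m Q p' q')" using eq by simp
  note A = F1[OF r(1-4)] F1[OF r(5-8)]
  consider "p \<le> q" "p' \<le> q'" | "\<not> p \<le> q" "\<not> p' \<le> q'" | "p \<le> q" "\<not> p' \<le> q'" | "\<not> p \<le> q" "p' \<le> q'"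
    by blast
  then show ?thesis
  proof cases
    case 1
    have "real_of_int (q - p) = real_of_int (q' - p')" using e1 A 1 X by simp
    moreover have "real_of_int p = real_of_int p'" using e2 F2[OF r(1-4)] F2[OF r(5-8)] 1 X by simp
    ultimately show ?thesis by linarith
  next
    case 2
    have "real_of_int (p - q) = real_of_int (p' - q')" using e1 A 2 Y by simp
    moreover have "real_of_int q = real_of_int q'" using e3 F3[OF r(1-4)] F3[OF r(5-8)] 2 Y by simp
    ultimately show ?thesis by linarith
  next
    case 3
    have "- real_of_int (q - p) * cross2 u v = real_of_int (p' - q') * cross2 v w" using e1 A 3 by simp
    moreover have "real_of_int (q - p) * cross2 u v \<ge> 0" using 3 X by simp
    moreover have "real_of_int (p' - q') * cross2 v w > 0" using 3 Y by simp
    ultimately show ?thesis by linarith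
  next
    case 4
    have "real_of_int (p - q) * cross2 v w = - real_of_int (q' - p') * cross2 u v" using e1 A 4 by simp
    moreover have "real_of_int (q' - p') * cross2 u v \<ge> 0" using 4 X by simp
    moreover have "real_of_int (p - q) * cross2 v w > 0" using 4 Y by simp
    ultimately show ?thesis by linarith
  qed
qed

lemma gq_inj:
  assumes "convex_quad_ccw Q" "m > 0" "inG m c" "inG m d" "gq m Q c = gq m Q d"
  shows "c = d"
proof -
  obtain i j where c: "c = (i,j)" by (cases c)
  obtain i' j' where d: "d = (i',j')" by (cases d)
  have "Vp m Q i j = Vp m Q i' j'" using assms(5) by (simp add: gq_def c d)
  then show ?thesis using Vp_inj[OF assms(1,2)] assms(3,4) c d by (auto simp: inG_def)
qed

lemma adj4_cases: "adj4 (i,j) d \<Longrightarrow> d = (i,j+1) \<or> d = (i,j-1) \<or> d = (i+1,j) \<or> d = (i-1,j)"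
  by (cases d) (auto simp: adj4_def abs_if split: if_splits)

lemma gq_common_side: "adj4 c d \<Longrightarrow> common_side (gq m Q c) (gq m Q d)"
proof -
  assume a: "adj4 c d"
  obtain i j where c: "c = (i,j)" by (cases c)
  from adj4_cases[of i j d] a c consider "d = (i,j+1)" | "d = (i,j-1)" | "d = (i+1,j)" | "d = (i-1,j)" by blast
  then show ?thesis
  proof cases
    case 1
    have "side (gq m Q c) 1 = side (gq m Q d) 3" using 1 c by (simp add: side_def gq_def closed_segment_commute)
    moreover have "(1::nat) < 4" "(3::nat) < 4" by simp_all
    ultimately show ?thesis unfolding common_side_def by blast
  next
    case 2
    have "side (gq m Q c) 3 = side (gq m Q d) 1" using 2 c by (simp add: side_def gq_def closed_segment_commute)
    moreover have "(3::nat) < 4" "(1::nat) < 4" by simp_all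
    ultimately show ?thesis unfolding common_side_def by blast
  next
    case 3
    have "side (gq m Q c) 2 = side (gq m Q d) 0" using 3 c by (simp add: side_def gq_def closed_segment_commute)
    moreover have "(2::nat) < 4" "(0::nat) < 4" by simp_all
    ultimately show ?thesis unfolding common_side_def by blast
  next
    case 4
    have "side (gq m Q c) 0 = side (gq m Q d) 2" using 4 c by (simp add: side_def gq_def closed_segment_commute)
    moreover have "(0::nat) < 4" "(2::nat) < 4" by simp_all
    ultimately show ?thesis unfolding common_side_def by blast
  qed
qed

lemma in_gq: "p \<in> {fst c, fst c + 1} \<Longrightarrow> q \<in> {snd c, snd c + 1} \<Longrightarrow> Vp m Q p q \<in> set (gq m Q c)"
  by (cases c) (auto simp: gq_def)

lemma gq_common_vertex: "adj8 c d \<Longrightarrow> common_vertex (gq m Q c) (gq m Q d)"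
proof -
  assume a: "adj8 c d"
  define p where "p = max (fst c) (fst d)"
  define q where "q = max (snd c) (snd d)"
  have "Vp m Q p q \<in> set (gq m Q c)" "Vp m Q p q \<in> set (gq m Q d)"
    using a by (auto intro!: in_gq simp: p_def q_def adj8_def abs_if max_def split: if_splits)
  then obtain i j where "i < length (gq m Q c)" "j < length (gq m Q d)" "gq m Q c ! i = gq m Q d ! j"
    by (metis in_set_conv_nth)
  moreover have "length (gq m Q c) = 4" "length (gq m Q d) = 4" by (cases c, simp add: gq_def, cases d, simp add: gq_def)
  ultimately show ?thesis unfolding common_vertex_def by metis
qed



lemma cross2_diff: "cross2 e (x - y) = cross2 e x - cross2 e y"
  by (simp add: cross2_def algebra_simps)

lemma edge_frontier:
  assumes fin: "finite P" and a: "a \<in> P" and b: "b \<in> P" and ab: "a \<noteq> b"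
    and pos: "\<And>x. x \<in> P \<Longrightarrow> cross2 (b - a) (x - a) \<ge> 0"
  shows "closed_segment a b \<subseteq> frontier (convex hull P)"
proof
  fix x assume x: "x \<in> closed_segment a b"
  define d where "d = b - a"
  define \<phi> where "\<phi> y = cross2 d (y - a)" for y
  have cvx: "convex {y. \<phi> y \<ge> 0}"
    unfolding convex_def
  proof (intro allI impI ballI)
    fix y z :: pt and u v :: real
    assume yz: "y \<in> {y. \<phi> y \<ge> 0}" "z \<in> {y. \<phi> y \<ge> 0}" and uv: "0 \<le> u" "0 \<le> v" "u + v = 1"
    have "\<phi> (u *\<^sub>R y + v *\<^sub>R z) = u * \<phi> y + v * \<phi> z"
    proof -
      have "u *\<^sub>R (y - a) + v *\<^sub>R (z - a) = u *\<^sub>R y + v *\<^sub>R z - (u + v) *\<^sub>R a"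
        by (simp add: algebra_simps)
      then have "u *\<^sub>R y + v *\<^sub>R z - a = u *\<^sub>R (y - a) + v *\<^sub>R (z - a)"
        using uv(3) by simp
      then show ?thesis unfolding \<phi>_def by (simp add: cross2_add cross2_scale)
    qed
    then show "u *\<^sub>R y + v *\<^sub>R z \<in> {y. \<phi> y \<ge> 0}" using yz uv by simp
  qed
  have Psub: "P \<subseteq> {y. \<phi> y \<ge> 0}" using pos by (auto simp: \<phi>_def d_def)
  have hsub: "convex hull P \<subseteq> {y. \<phi> y \<ge> 0}" using hull_minimal[of P "{y. \<phi> y \<ge> 0}" convex] Psub cvx by blast
  have xh: "x \<in> convex hull P"
  proof -
    have ha: "a \<in> convex hull P" by (rule hull_inc[OF a])
    have hb: "b \<in> convex hull P" by (rule hull_inc[OF b])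
    show ?thesis using closed_segment_subset_convex_hull[OF ha hb] x by (rule subsetD)
  qed
  have cl: "closure (convex hull P) = convex hull P"
    using compact_convex_hull[OF finite_imp_compact[OF fin]] by (simp add: compact_imp_closed)
  obtain t where t: "0 \<le> t" "t \<le> 1" "x = (1 - t) *\<^sub>R a + t *\<^sub>R b" using x in_segment(1) by blast
  have "x - a = t *\<^sub>R d" unfolding t(3) d_def by (simp add: algebra_simps)
  then have px: "\<phi> x = 0" unfolding \<phi>_def by (simp add: cross2_scale cross2_self)
  have "x \<notin> interior (convex hull P)"
  proof
    assume "x \<in> interior (convex hull P)"
    then obtain e where e: "e > 0" "ball x e \<subseteq> convex hull P" using mem_interior by blast
    define n :: pt where "n = (- snd d, fst d)"
    have dn: "cross2 d n = (fst d)^2 + (snd d)^2" by (simp add: cross2_def n_def power2_eq_square)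
    have "d \<noteq> 0" using ab d_def by simp
    then have "fst d \<noteq> 0 \<or> snd d \<noteq> 0" by (simp add: prod_eq_iff)
    then have dpos: "(fst d)^2 + (snd d)^2 > 0" by (simp add: sum_power2_gt_zero_iff)
    have nn: "norm n > 0" using dpos by (auto simp: n_def norm_Pair)
    define s where "s = e / (2 * norm n)"
    have s: "s > 0" using e nn by (simp add: s_def)
    define y where "y = x - s *\<^sub>R n"
    have "dist x y = s * norm n" using s by (simp add: y_def dist_norm)
    also have "\<dots> = e / 2" using nn by (simp add: s_def)
    finally have "y \<in> ball x e" using e by simp
    then have "\<phi> y \<ge> 0" using e hsub by blast
    moreover have "\<phi> y = \<phi> x - s * cross2 d n"
      unfolding \<phi>_def y_def by (simp add: cross2_diff cross2_scale cross2_add)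
    ultimately show False using px dn dpos s mult_pos_pos[OF s dpos] by simp
  qed
  then show "x \<in> frontier (convex hull P)" using xh cl by (simp add: frontier_def)
qed



lemma seg_mem: "x - c = (a - c) + t *\<^sub>R (b - a) \<Longrightarrow> 0 \<le> t \<Longrightarrow> t \<le> 1 \<Longrightarrow> x \<in> closed_segment a b"
  unfolding in_segment(1) by (intro exI[of _ t]) (simp add: algebra_simps)

lemma sub_seg: "x \<in> closed_segment a b \<Longrightarrow> y \<in> closed_segment a b \<Longrightarrow> closed_segment x y \<subseteq> closed_segment a b"
  by (simp add: closed_segment_subset)

lemma Vp_E12: "m > 0 \<Longrightarrow> 0 \<le> q \<Longrightarrow> q \<le> int m \<Longrightarrow> Vp m Q 0 q \<in> closed_segment (Q 1) (Q 2)"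
  apply (rule seg_mem[where c = "Q 1" and t = "real_of_int q / real m"])
  apply (subst Vp_rel, simp_all)
  done

lemma Vp_E23: "m > 0 \<Longrightarrow> 0 \<le> p \<Longrightarrow> p \<le> int m \<Longrightarrow> Vp m Q p (int m) \<in> closed_segment (Q 2) (Q 3)"
  apply (rule seg_mem[where c = "Q 1" and t = "real_of_int p / real m"])
  apply (subst Vp_rel, simp_all)
  apply (simp add: prod_eq_iff field_simps)
  done

lemma Vp_E34: "m > 0 \<Longrightarrow> 0 \<le> q \<Longrightarrow> q \<le> int m \<Longrightarrow> Vp m Q (int m) q \<in> closed_segment (Q 3) (Q 4)"
  apply (rule seg_mem[where c = "Q 1" and t = "(real m - real_of_int q) / real m"])
  apply (subst Vp_rel, simp_all)
  apply (auto simp add: prod_eq_iff field_simps)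
  done

lemma Vp_E41: "m > 0 \<Longrightarrow> 0 \<le> p \<Longrightarrow> p \<le> int m \<Longrightarrow> Vp m Q p 0 \<in> closed_segment (Q 1) (Q 4)"
  apply (rule seg_mem[where c = "Q 1" and t = "real_of_int p / real m"])
  apply (subst Vp_rel, simp_all)
  done



lemma quad_edges_frontier:
  assumes cv: "convex_quad_ccw Q"
  shows "closed_segment (Q 1) (Q 2) \<subseteq> frontier (convex hull {Q 1, Q 2, Q 3, Q 4})"
    "closed_segment (Q 2) (Q 3) \<subseteq> frontier (convex hull {Q 1, Q 2, Q 3, Q 4})"
    "closed_segment (Q 3) (Q 4) \<subseteq> frontier (convex hull {Q 1, Q 2, Q 3, Q 4})"
    "closed_segment (Q 1) (Q 4) \<subseteq> frontier (convex hull {Q 1, Q 2, Q 3, Q 4})"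
proof -
  have c: "cross2 (Q 2 - Q 1) (Q 3 - Q 2) > 0" "cross2 (Q 3 - Q 2) (Q 4 - Q 3) > 0"
     "cross2 (Q 4 - Q 3) (Q 1 - Q 4) > 0" "cross2 (Q 1 - Q 4) (Q 2 - Q 1) > 0"
    using cv by (auto simp: convex_quad_ccw_def)
  have ne: "Q 1 \<noteq> Q 2" "Q 2 \<noteq> Q 3" "Q 3 \<noteq> Q 4" "Q 4 \<noteq> Q 1"
    using c by (auto simp: cross2_def)
  show "closed_segment (Q 1) (Q 2) \<subseteq> frontier (convex hull {Q 1, Q 2, Q 3, Q 4})"
    by (rule edge_frontier) (use c ne in \<open>auto simp: cross2_def algebra_simps\<close>)
  show "closed_segment (Q 2) (Q 3) \<subseteq> frontier (convex hull {Q 1, Q 2, Q 3, Q 4})"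
    by (rule edge_frontier) (use c ne in \<open>auto simp: cross2_def algebra_simps\<close>)
  show "closed_segment (Q 3) (Q 4) \<subseteq> frontier (convex hull {Q 1, Q 2, Q 3, Q 4})"
    by (rule edge_frontier) (use c ne in \<open>auto simp: cross2_def algebra_simps\<close>)
  have "closed_segment (Q 4) (Q 1) \<subseteq> frontier (convex hull {Q 1, Q 2, Q 3, Q 4})"
    by (rule edge_frontier) (use c ne in \<open>auto simp: cross2_def algebra_simps\<close>)
  then show "closed_segment (Q 1) (Q 4) \<subseteq> frontier (convex hull {Q 1, Q 2, Q 3, Q 4})"
    by (simp add: closed_segment_commute)
qed

lemma border_side:
  assumes cv: "convex_quad_ccw Q" and m: "m > 0" and c: "inG m c" and b: "bord m c"
  shows "\<exists>i<4. side (gq m Q c) i \<subseteq> frontier (convex hull {Q 1, Q 2, Q 3, Q 4})"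
proof -
  obtain i j where ij: "c = (i,j)" by (cases c)
  have r: "0 \<le> i" "i < int m" "0 \<le> j" "j < int m" using c ij by (auto simp: inG_def)
  note F = quad_edges_frontier[OF cv]
  consider "i = 0" | "j = int m - 1" | "i = int m - 1" | "j = 0" using b ij by (auto simp: bord_def)
  then show ?thesis
  proof cases
    case 1
    have eqs: "side (gq m Q c) 0 = closed_segment (Vp m Q 0 j) (Vp m Q 0 (j + 1))"
      using 1 by (simp add: side_def ij gq_def)
    have "Vp m Q 0 j \<in> closed_segment (Q 1) (Q 2)" "Vp m Q 0 (j + 1) \<in> closed_segment (Q 1) (Q 2)"
      by (rule Vp_E12[OF m]; use r 1 in linarith)+
    then have "side (gq m Q c) 0 \<subseteq> closed_segment (Q 1) (Q 2)"
      unfolding eqs by (rule sub_seg)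
    then show ?thesis using F(1) by (meson order_trans zero_less_numeral)
  next
    case 2
    have eqs: "side (gq m Q c) 1 = closed_segment (Vp m Q i (int m)) (Vp m Q (i + 1) (int m))"
      using 2 by (simp add: side_def ij gq_def)
    have "Vp m Q i (int m) \<in> closed_segment (Q 2) (Q 3)" "Vp m Q (i + 1) (int m) \<in> closed_segment (Q 2) (Q 3)"
      by (rule Vp_E23[OF m]; use r 2 in linarith)+
    then have "side (gq m Q c) 1 \<subseteq> closed_segment (Q 2) (Q 3)"
      unfolding eqs by (rule sub_seg)
    then show ?thesis using F(2) by (meson order_trans one_less_numeral_iff semiring_norm(76))
  next
    case 3
    have eqs: "side (gq m Q c) 2 = closed_segment (Vp m Q (int m) (j + 1)) (Vp m Q (int m) j)"
      using 3 by (simp add: side_def ij gq_def)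
    have "Vp m Q (int m) (j + 1) \<in> closed_segment (Q 3) (Q 4)" "Vp m Q (int m) j \<in> closed_segment (Q 3) (Q 4)"
      by (rule Vp_E34[OF m]; use r 3 in linarith)+
    then have "side (gq m Q c) 2 \<subseteq> closed_segment (Q 3) (Q 4)"
      unfolding eqs by (rule sub_seg)
    moreover have "(2::nat) < 4" by simp
    ultimately show ?thesis using F(3) by (meson order_trans)
  next
    case 4
    have eqs: "side (gq m Q c) 3 = closed_segment (Vp m Q (i + 1) 0) (Vp m Q i 0)"
      using 4 by (simp add: side_def ij gq_def)
    have "Vp m Q (i + 1) 0 \<in> closed_segment (Q 1) (Q 4)" "Vp m Q i 0 \<in> closed_segment (Q 1) (Q 4)"
      by (rule Vp_E41[OF m]; use r 4 in linarith)+
    then have "side (gq m Q c) 3 \<subseteq> closed_segment (Q 1) (Q 4)"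
      unfolding eqs by (rule sub_seg)
    moreover have "(3::nat) < 4" by simp
    ultimately show ?thesis using F(4) by (meson order_trans)
  qed
qed



lemma finite_G: "finite {c. inG m c}"
proof -
  have "{c. inG m c} = {0..<int m} \<times> {0..<int m}" by (auto simp: inG_def)
  then show ?thesis by simp
qed

lemma rdp_obt:
  assumes "R\<^sup>*\<^sup>* x y" "P x" "\<And>a b. R a b \<Longrightarrow> P b"
  obtains ps where "ps \<noteq> []" "hd ps = x" "last ps = y" "distinct ps" "set ps \<subseteq> {z. P z}"
    "\<forall>i. Suc i < length ps \<longrightarrow> R (ps ! i) (ps ! Suc i)"
proof -
  have "\<exists>ps. ps \<noteq> [] \<and> hd ps = x \<and> last ps = y \<and> distinct ps \<and> set ps \<subseteq> {z. P z} \<and>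
    (\<forall>i. Suc i < length ps \<longrightarrow> R (ps ! i) (ps ! Suc i))"
    apply (rule rtranclp_distinct_path[of R x y P])
    using assms by auto
  then obtain ps where
    "ps \<noteq> [] \<and> hd ps = x \<and> last ps = y \<and> distinct ps \<and> set ps \<subseteq> {z. P z} \<and>
    (\<forall>i. Suc i < length ps \<longrightarrow> R (ps ! i) (ps ! Suc i))" by (elim exE)
  then show ?thesis using that by (elim conjE)
qed

theorem proposition4p1:
  fixes Q :: "nat \<Rightarrow> real \<times> real" and m :: nat and W :: "quad set"
  assumes "convex_quad_ccw Q"
    and "dist (Q 1) (Q 3) \<le> dist (Q 2) (Q 4)"
    and "m \<ge> 2"
    and "W \<subseteq> Sset m Q"
    and "is_tree W adjW"
    and "B \<in> Sset m Q - W"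
  shows "\<exists>ps. is_gpath (Sset m Q - W) adjB ps \<and> hd ps = B \<and> border_quad m Q (last ps)"
proof -
  note cv = assms(1)
  have m0: "m > 0" and m1: "m \<ge> 1" using assms(3) by auto
  define G where "G = {c. inG m c}"
  define g where "g = gq m Q"
  have SsetG: "Sset m Q = g ` G" using Sset_eq[OF m1] by (simp add: g_def G_def)
  have inj: "inj_on g G" unfolding inj_on_def g_def G_def using gq_inj[OF cv m0] by blast
  define Wg where "Wg = {c. inG m c \<and> g c \<in> W}"
  have finW: "finite Wg" using finite_G[of m] by (rule rev_finite_subset) (auto simp: Wg_def)
  have WgG: "Wg \<subseteq> {c. inG m c}" by (auto simp: Wg_def)
  have nc: "\<not> has_cycle Wg adj4"
  proof
    assume "has_cycle Wg adj4"
    then obtain cs where cs: "3 \<le> length cs" "is_gpath Wg adj4 cs" "adj4 (last cs) (hd cs)"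
      by (auto simp: has_cycle_def)
    have csG: "set cs \<subseteq> G" using cs(2) by (auto simp: is_gpath_def Wg_def G_def)
    have ad: "adjW (g a) (g b)" if "a \<in> G" "b \<in> G" "adj4 a b" for a b
    proof -
      have "a \<noteq> b" using that(3) by (auto simp: adj4_def)
      then have "g a \<noteq> g b" using inj that by (meson inj_on_def)
      then show ?thesis using gq_common_side[OF that(3)] by (simp add: adjW_def g_def)
    qed
    have "is_gpath W adjW (map g cs)"
      unfolding is_gpath_def
    proof (intro conjI allI impI)
      show "map g cs \<noteq> []" using cs(2) by (simp add: is_gpath_def)
      show "set (map g cs) \<subseteq> W" using cs(2) by (auto simp: is_gpath_def Wg_def)
      show "distinct (map g cs)" using cs(2) csG inj by (simp add: is_gpath_def distinct_map inj_on_subset)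
      fix i assume i: "Suc i < length (map g cs)"
      then have "adj4 (cs ! i) (cs ! Suc i)" using cs(2) by (simp add: is_gpath_def)
      moreover have "cs ! i \<in> G" "cs ! Suc i \<in> G" using csG i by auto
      ultimately show "adjW (map g cs ! i) (map g cs ! Suc i)" using ad i by simp
    qed
    moreover have "adjW (last (map g cs)) (hd (map g cs))"
    proof -
      have ne: "cs \<noteq> []" using cs(1) by auto
      have "last cs \<in> G" "hd cs \<in> G" using csG ne by auto
      then show ?thesis using ad cs(3) ne by (simp add: last_map hd_map)
    qed
    ultimately have "has_cycle W adjW" using cs(1) unfolding has_cycle_def by (intro exI[of _ "map g cs"]) simp
    then show False using assms(5) by (simp add: is_tree_def)
  qed
  obtain b where b: "b \<in> G" "g b = B" using assms(6) SsetG by auto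
  have bW: "b \<notin> Wg" using b assms(6) by (auto simp: Wg_def)
  have "good m Wg b" using grid_main[OF finW WgG nc _ bW] b by (auto simp: G_def inG_def inG'_def)
  then obtain f where f: "\<not> inG m f" "(RW m Wg)\<^sup>*\<^sup>* b f" by (auto simp: good_def)
  obtain y where y: "inG m y" "bord m y" "y \<notin> Wg" "(RG m Wg)\<^sup>*\<^sup>* b y"
    using exit_frame[OF f(2) f(1)] b by (auto simp: G_def)
  have Pstep: "\<And>a c. RG m Wg a c \<Longrightarrow> inG m c \<and> c \<notin> Wg" by (simp add: RG_def)
  have bP: "inG m b \<and> b \<notin> Wg" using b bW by (simp add: G_def)
  obtain ps where ps: "ps \<noteq> []" "hd ps = b" "last ps = y" "distinct ps"
    "set ps \<subseteq> {z. inG m z \<and> z \<notin> Wg}" "\<forall>i. Suc i < length ps \<longrightarrow> RG m Wg (ps ! i) (ps ! Suc i)"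
    by (rule rdp_obt[where P="\<lambda>z. inG m z \<and> z \<notin> Wg", OF y(4) bP Pstep])
  have psG: "set ps \<subseteq> G" using ps(5) by (auto simp: G_def)
  have "is_gpath (Sset m Q - W) adjB (map g ps)"
    unfolding is_gpath_def
  proof (intro conjI allI impI)
    show "map g ps \<noteq> []" using ps(1) by simp
    show "set (map g ps) \<subseteq> Sset m Q - W" using ps(5) SsetG by (auto simp: Wg_def G_def)
    show "distinct (map g ps)" using ps(4) psG inj by (simp add: distinct_map inj_on_subset)
    fix i assume i: "Suc i < length (map g ps)"
    then have r: "RG m Wg (ps ! i) (ps ! Suc i)" using ps(6) by simp
    then have a8: "adj8 (ps ! i) (ps ! Suc i)" by (simp add: RG_def)
    then have "ps ! i \<noteq> ps ! Suc i" by (simp add: adj8_def)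
    moreover have "ps ! i \<in> G" "ps ! Suc i \<in> G" using psG i by auto
    ultimately have "g (ps ! i) \<noteq> g (ps ! Suc i)" using inj by (meson inj_on_def)
    then show "adjB (map g ps ! i) (map g ps ! Suc i)"
      using gq_common_vertex[OF a8] i by (simp add: adjB_def g_def)
  qed
  moreover have "hd (map g ps) = B" using ps b by (simp add: hd_map)
  moreover have "border_quad m Q (last (map g ps))"
  proof -
    have "last (map g ps) = g y" using ps by (simp add: last_map)
    moreover have "g y \<in> Sset m Q" using y SsetG by (auto simp: G_def)
    ultimately show ?thesis using border_side[OF cv m0 y(1) y(2)] by (simp add: border_quad_def g_def)
  qed
  ultimately show ?thesis by blast
qed


end
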